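(* Let $X_1,\ldots,X_n$ be non-empty sets, let $L=\{x_1,\ldots,x_k\}\subset X_1\times\cdots\times X_n$ be a loop, and let $n_1,\ldots,n_k$ be integers with $\gcd(n_1,\ldots,n_k)=1$ such that the formal sum $\sum_{j=1}^k n_jx_j$ vanishes. If $r_1,\ldots,r_k$ are real numbers such that the formal sum $\sum_{j=1}^k r_jx_j$ vanishes, then there is a real number $\alpha$ with $r_j=\alpha n_j$ for every $j$.
   Context: For points $x_1,\ldots,x_k\in X_1\times\cdots\times X_n$ (with $x_j=(x_{j1},\ldots,x_{jn})$) and numbers $c_1,\ldots,c_k$, the formal sum $\sum_j c_jx_j$ vanishes (coordinate-wise) if for every $i\in\{1,\ldots,n\}$ and every $a\in X_i$, $\sum_{j:\,x_{ji}=a}c_j=0$. A non-empty finite set $L=\{x_1,\ldots,x_k\}$ of distinct points is a loop if there exist non-zero integers $n_1,\ldots,n_k$ such that $\sum_j n_jx_j$ vanishes, and no strictly smaller non-empty subset of $L$ has this property. *)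

theory Defs
  imports "HOL-Analysis.Analysis"
begin

text \<open>Points of X_1 x ... x X_n are modelled as extensional functions in
  PiE {..<n} X (coordinates indexed 0..n-1). A formal sum over a finite set L
  of distinct points is given by a coefficient function c on L.\<close>

definition vanishes ::
  "nat \<Rightarrow> (nat \<Rightarrow> 'a set) \<Rightarrow> (nat \<Rightarrow> 'a) set \<Rightarrow> ((nat \<Rightarrow> 'a) \<Rightarrow> 'b::comm_monoid_add) \<Rightarrow> bool"
  where "vanishes n X L c \<longleftrightarrow>
    (\<forall>i<n. \<forall>a\<in>X i. (\<Sum>x\<in>{x\<in>L. x i = a}. c x) = 0)"

definition has_int_relation ::
  "nat \<Rightarrow> (nat \<Rightarrow> 'a set) \<Rightarrow> (nat \<Rightarrow> 'a) set \<Rightarrow> bool"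
  where "has_int_relation n X L \<longleftrightarrow>
    (\<exists>m :: (nat \<Rightarrow> 'a) \<Rightarrow> int. (\<forall>x\<in>L. m x \<noteq> 0) \<and> vanishes n X L m)"

definition is_loop ::
  "nat \<Rightarrow> (nat \<Rightarrow> 'a set) \<Rightarrow> (nat \<Rightarrow> 'a) set \<Rightarrow> bool"
  where "is_loop n X L \<longleftrightarrow>
    L \<noteq> {} \<and> finite L \<and> L \<subseteq> PiE {..<n} X \<and> has_int_relation n X L \<and>
    (\<forall>L'. L' \<subset> L \<and> L' \<noteq> {} \<longrightarrow> \<not> has_int_relation n X L')"

end

theory Submission
  imports Defs
begin

lemma qfun:
  fixes v :: real assumes "v \<noteq> 0"
  shows "\<exists>\<phi>::real \<Rightarrow> rat. (\<forall>a b. \<phi> (a + b) = \<phi> a + \<phi> b) \<and> \<phi> v = 1"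
proof -
  interpret p: vector_space_pair "(\<lambda>q::rat. \<lambda>x::real. of_rat q * x)" "(*) :: rat \<Rightarrow> rat \<Rightarrow> rat"
    by unfold_locales (auto simp: algebra_simps of_rat_add of_rat_mult)
  have ind: "p.vs1.independent {v}"
    using assms by (intro p.vs1.independent_insertI) (auto simp: p.vs1.independent_empty)
  interpret l: Vector_Spaces.linear "(\<lambda>q::rat. \<lambda>x::real. of_rat q * x)" "(*) :: rat \<Rightarrow> rat \<Rightarrow> rat" "p.construct {v} (\<lambda>_. 1)"
    by (rule p.linear_construct[OF ind])
  show ?thesis
    by (rule exI[of _ "p.construct {v} (\<lambda>_. 1)"]) (simp add: l.add p.construct_basis[OF ind])
qed

lemma clear_denoms:
  fixes q :: "'b \<Rightarrow> rat"
  assumes "finite L"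
  shows "\<exists>m::'b \<Rightarrow> int. \<exists>d::int. d > 0 \<and> (\<forall>x\<in>L. of_int (m x) = of_int d * q x)"
  using assms
proof (induction L rule: finite_induct)
  case empty
  then show ?case by (intro exI[of _ "\<lambda>_. 0"] exI[of _ 1]) simp
next
  case (insert x F)
  then obtain m d where md: "d > 0" "\<forall>y\<in>F. of_int (m y) = of_int d * q y" by blast
  obtain a b where ab: "quotient_of (q x) = (a, b)" by (cases "quotient_of (q x)")
  have b: "b > 0" using ab quotient_of_denom_pos by blast
  have qx: "q x = of_int a / of_int b" using ab quotient_of_div by blast
  show ?case
  proof (intro exI[of _ "\<lambda>y. if y = x then d * a else m y * b"] exI[of _ "d * b"] conjI ballI)
    show "0 < d * b" using md b by simp
    fix y assume "y \<in> insert x F"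
    then show "rat_of_int (if y = x then d * a else m y * b) = rat_of_int (d * b) * q y"
      using md b qx by (auto simp: field_simps)
  qed
qed

lemma additive_sum:
  assumes "\<forall>a b. \<phi> (a + b) = \<phi> a + \<phi> b"
  shows "\<phi> (sum f A) = (\<Sum>x\<in>A. \<phi> (f x :: 'c::comm_monoid_add) :: 'd::cancel_comm_monoid_add)"
proof -
  have z: "\<phi> 0 = 0" using assms[rule_format, of 0 0] by simp
  show ?thesis
    by (induction A rule: infinite_finite_induct) (auto simp: z assms)
qed

lemma real_to_int:
  fixes s :: "(nat \<Rightarrow> 'a) \<Rightarrow> real"
  assumes "finite L" "vanishes n X L s" "x1 \<in> L" "s x1 \<noteq> 0"
  shows "\<exists>m::(nat \<Rightarrow> 'a) \<Rightarrow> int. vanishes n X L m \<and> m x1 \<noteq> 0 \<and> (\<forall>x\<in>L. s x = 0 \<longrightarrow> m x = 0)"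
proof -
  obtain \<phi> :: "real \<Rightarrow> rat" where ph: "\<forall>a b. \<phi> (a + b) = \<phi> a + \<phi> b" "\<phi> (s x1) = 1"
    using qfun[OF assms(4)] by blast
  have z: "\<phi> 0 = 0" using ph(1)[rule_format, of 0 0] by simp
  obtain m d where md: "(d::int) > 0" "\<forall>x\<in>L. of_int (m x) = of_int d * \<phi> (s x)"
    using clear_denoms[OF assms(1), of "\<lambda>x. \<phi> (s x)"] by blast
  have "vanishes n X L m"
    unfolding vanishes_def
  proof (intro allI impI ballI)
    fix i a assume "i < n" "a \<in> X i"
    then have "(\<Sum>x\<in>{x\<in>L. x i = a}. s x) = 0" using assms(2) by (simp add: vanishes_def)
    then have "(\<Sum>x\<in>{x\<in>L. x i = a}. \<phi> (s x)) = 0"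
      using additive_sum[OF ph(1), of s "{x\<in>L. x i = a}"] z by simp
    then have "rat_of_int (\<Sum>x\<in>{x\<in>L. x i = a}. m x) = 0"
      using md(2) by (simp add: sum_distrib_left[symmetric])
    then show "(\<Sum>x\<in>{x\<in>L. x i = a}. m x) = 0" by (metis of_int_eq_0_iff of_int_sum)
  qed
  moreover have "m x1 \<noteq> 0" using md ph(2) assms(3) by force
  moreover have "\<forall>x\<in>L. s x = 0 \<longrightarrow> m x = 0" using md z by force
  ultimately show ?thesis by blast
qed

theorem lemma3:
  fixes n :: nat and X :: "nat \<Rightarrow> 'a set" and L :: "(nat \<Rightarrow> 'a) set"
    and N :: "(nat \<Rightarrow> 'a) \<Rightarrow> int" and r :: "(nat \<Rightarrow> 'a) \<Rightarrow> real"
  assumes "\<forall>i<n. X i \<noteq> {}"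
    and "is_loop n X L"
    and "Gcd (N ` L) = 1"
    and "vanishes n X L N"
    and "vanishes n X L r"
  shows "\<exists>\<alpha>::real. \<forall>x\<in>L. r x = \<alpha> * of_int (N x)"
proof -
  have fin: "finite L" and loop: "\<forall>L'. L' \<subset> L \<and> L' \<noteq> {} \<longrightarrow> \<not> has_int_relation n X L'"
    using assms(2) by (auto simp: is_loop_def)
  obtain x0 where x0: "x0 \<in> L" "N x0 \<noteq> 0"
  proof -
    have "\<exists>x0\<in>L. N x0 \<noteq> 0"
    proof (rule ccontr)
      assume "\<not> ?thesis"
      then have "N ` L \<subseteq> {0}" by auto
      then have "Gcd (N ` L) = 0" by (metis Gcd_0_iff)
      then show False using assms(3) by simp
    qed
    then show ?thesis using that by blast
  qed
  define \<alpha> where "\<alpha> = r x0 / of_int (N x0)"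
  define s where "s x = r x - \<alpha> * of_int (N x)" for x
  have van: "vanishes n X L s"
    unfolding vanishes_def
  proof (intro allI impI ballI)
    fix i a assume "i < n" "a \<in> X i"
    then have "(\<Sum>x\<in>{x\<in>L. x i = a}. r x) = 0" "(\<Sum>x\<in>{x\<in>L. x i = a}. N x) = 0"
      using assms(4,5) by (auto simp: vanishes_def)
    then have "(\<Sum>x\<in>{x\<in>L. x i = a}. real_of_int (N x)) = 0"
      by (metis of_int_0 of_int_sum)
    then show "(\<Sum>x\<in>{x\<in>L. x i = a}. s x) = 0"
      using \<open>(\<Sum>x\<in>{x\<in>L. x i = a}. r x) = 0\<close>
      by (simp add: s_def sum_subtractf sum_distrib_left[symmetric])
  qed
  have s0: "s x0 = 0" using x0 by (simp add: s_def \<alpha>_def)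
  have "\<forall>x\<in>L. s x = 0"
  proof (rule ccontr)
    assume "\<not> ?thesis"
    then obtain x1 where x1: "x1 \<in> L" "s x1 \<noteq> 0" by blast
    obtain m :: "(nat \<Rightarrow> 'a) \<Rightarrow> int" where m: "vanishes n X L m" "m x1 \<noteq> 0" "\<forall>x\<in>L. s x = 0 \<longrightarrow> m x = 0"
      using real_to_int[OF fin van x1] by blast
    define S where "S = {x\<in>L. m x \<noteq> 0}"
    have "S \<subset> L" using x0 s0 m(3) by (auto simp: S_def)
    moreover have "S \<noteq> {}" using x1 m(2) by (auto simp: S_def)
    moreover have "has_int_relation n X S"
      unfolding has_int_relation_def
    proof (intro exI[of _ m] conjI)
      show "\<forall>x\<in>S. m x \<noteq> 0" by (simp add: S_def)
      show "vanishes n X S m"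
        unfolding vanishes_def
      proof (intro allI impI ballI)
        fix i a assume "i < n" "a \<in> X i"
        then have "(\<Sum>x\<in>{x\<in>L. x i = a}. m x) = 0" using m(1) by (simp add: vanishes_def)
        moreover have "(\<Sum>x\<in>{x\<in>S. x i = a}. m x) = (\<Sum>x\<in>{x\<in>L. x i = a}. m x)"
          by (rule sum.mono_neutral_left) (use fin in \<open>auto simp: S_def\<close>)
        ultimately show "(\<Sum>x\<in>{x\<in>S. x i = a}. m x) = 0" by simp
      qed
    qed
    ultimately show False using loop by blast
  qed
  then show ?thesis by (intro exI[of _ \<alpha>]) (simp add: s_def)
qed

end
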